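(* Let $Y$ be a regular space with $G_\delta$ points such that for every Suslin tree $T$ and every continuous $f:T\to Y$ there is $y\in Y$ with $f^{-1}(\{y\})$ uncountable. Then $\mathsf{S}(T,Y)$ holds for every Suslin tree $T$.
   Context: All spaces are Hausdorff and maps continuous. A tree is a partially ordered set in which the predecessors of each point are well ordered; trees are Hausdorff (two points at a limit level with the same predecessors coincide) and carry the interval topology (base: $\{z:x<z\le y\}$ for $x<y$ and singletons of minimal elements). A Suslin tree is a tree of height $\omega_1$ all of whose chains and antichains are countable. For a non-Lindelöf space $X$ and a space $Y$, $\mathsf{S}(X,Y)$ means: for every continuous $f:X\to Y$ there are a Lindelöf $Z\subset X$ and a retraction $r:X\to Z$ with $f\circ r=f$. *)

theory Defs
  imports "HOL-Analysis.Analysis"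
begin

definition tree_pred :: "'a set \<Rightarrow> ('a \<Rightarrow> 'a \<Rightarrow> bool) \<Rightarrow> 'a \<Rightarrow> 'a set" where
  "tree_pred A lt x = {y \<in> A. lt y x}"

text \<open>The (reflexive) order restricted to the predecessors of x; its order type is the height of x.\<close>
definition pred_order :: "'a set \<Rightarrow> ('a \<Rightarrow> 'a \<Rightarrow> bool) \<Rightarrow> 'a \<Rightarrow> 'a rel" where
  "pred_order A lt x = {(a, b). a \<in> tree_pred A lt x \<and> b \<in> tree_pred A lt x \<and> (a = b \<or> lt a b)}"

text \<open>Partial order whose predecessor sets are well ordered, plus the Hausdorff condition:
  two points at a limit level (predecessor set nonempty without maximum) with the
  same predecessors coincide.\<close>
definition is_tree :: "'a set \<Rightarrow> ('a \<Rightarrow> 'a \<Rightarrow> bool) \<Rightarrow> bool" where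
  "is_tree A lt \<longleftrightarrow>
     (\<forall>x y. lt x y \<longrightarrow> x \<in> A \<and> y \<in> A) \<and>
     (\<forall>x\<in>A. \<not> lt x x) \<and>
     (\<forall>x\<in>A. \<forall>y\<in>A. \<forall>z\<in>A. lt x y \<and> lt y z \<longrightarrow> lt x z) \<and>
     (\<forall>x\<in>A. Well_order (pred_order A lt x)) \<and>
     (\<forall>x\<in>A. \<forall>y\<in>A. tree_pred A lt x = tree_pred A lt y \<and> tree_pred A lt x \<noteq> {} \<and>
        \<not> (\<exists>m\<in>tree_pred A lt x. \<forall>z\<in>tree_pred A lt x. z = m \<or> lt z m) \<longrightarrow> x = y)"

definition tree_base :: "'a set \<Rightarrow> ('a \<Rightarrow> 'a \<Rightarrow> bool) \<Rightarrow> 'a set set" where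
  "tree_base A lt =
     {{z \<in> A. lt x z \<and> (z = y \<or> lt z y)} | x y. x \<in> A \<and> y \<in> A \<and> lt x y} \<union>
     {{x} | x. x \<in> A \<and> (\<forall>y\<in>A. \<not> lt y x)}"

definition tree_topology :: "'a set \<Rightarrow> ('a \<Rightarrow> 'a \<Rightarrow> bool) \<Rightarrow> 'a topology" where
  "tree_topology A lt = topology_generated_by (tree_base A lt)"

definition tree_chain :: "'a set \<Rightarrow> ('a \<Rightarrow> 'a \<Rightarrow> bool) \<Rightarrow> 'a set \<Rightarrow> bool" where
  "tree_chain A lt C \<longleftrightarrow> C \<subseteq> A \<and> (\<forall>x\<in>C. \<forall>y\<in>C. x = y \<or> lt x y \<or> lt y x)"

definition tree_antichain :: "'a set \<Rightarrow> ('a \<Rightarrow> 'a \<Rightarrow> bool) \<Rightarrow> 'a set \<Rightarrow> bool" where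
  "tree_antichain A lt C \<longleftrightarrow> C \<subseteq> A \<and> (\<forall>x\<in>C. \<forall>y\<in>C. x \<noteq> y \<longrightarrow> \<not> lt x y \<and> \<not> lt y x)"

text \<open>Height omega_1: every node has height < omega_1 (countably many predecessors),
  and every countable ordinal (represented as a well-order on a subset of nat) is the
  height of some node.\<close>
definition height_omega1 :: "'a set \<Rightarrow> ('a \<Rightarrow> 'a \<Rightarrow> bool) \<Rightarrow> bool" where
  "height_omega1 A lt \<longleftrightarrow>
     (\<forall>x\<in>A. countable (tree_pred A lt x)) \<and>
     (\<forall>r :: nat rel. Well_order r \<longrightarrow> (\<exists>x\<in>A. (pred_order A lt x, r) \<in> ordIso))"

definition suslin_tree :: "'a set \<Rightarrow> ('a \<Rightarrow> 'a \<Rightarrow> bool) \<Rightarrow> bool" where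
  "suslin_tree A lt \<longleftrightarrow> is_tree A lt \<and> height_omega1 A lt \<and>
     (\<forall>C. tree_chain A lt C \<longrightarrow> countable C) \<and>
     (\<forall>C. tree_antichain A lt C \<longrightarrow> countable C)"

definition S_prop :: "'a topology \<Rightarrow> 'b topology \<Rightarrow> bool" where
  "S_prop X Y \<longleftrightarrow>
     (\<forall>f. continuous_map X Y f \<longrightarrow>
        (\<exists>Z r. Z \<subseteq> topspace X \<and> Lindelof_space (subtopology X Z) \<and>
               continuous_map X (subtopology X Z) r \<and> (\<forall>x\<in>Z. r x = x) \<and>
               (\<forall>x\<in>topspace X. f (r x) = f x)))"

end

theory Submission
  imports Defs
begin

definition itv :: "'a set \<Rightarrow> ('a \<Rightarrow> 'a \<Rightarrow> bool) \<Rightarrow> 'a \<Rightarrow> 'a \<Rightarrow> 'a set" where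
  "itv A lt t s = {z \<in> A. lt t z \<and> (z = s \<or> lt z s)}"

lemma tree_lt_in: "is_tree A lt \<Longrightarrow> lt x y \<Longrightarrow> x \<in> A \<and> y \<in> A"
  unfolding is_tree_def by blast

lemma tree_irrefl: "is_tree A lt \<Longrightarrow> \<not> lt x x"
  unfolding is_tree_def by blast

lemma tree_trans: "is_tree A lt \<Longrightarrow> lt x y \<Longrightarrow> lt y z \<Longrightarrow> lt x z"
  unfolding is_tree_def by (metis (no_types))

lemma tree_asym: "is_tree A lt \<Longrightarrow> lt x y \<Longrightarrow> \<not> lt y x"
  by (meson tree_irrefl tree_trans)

lemma tree_wo: "is_tree A lt \<Longrightarrow> x \<in> A \<Longrightarrow> Well_order (pred_order A lt x)"
  unfolding is_tree_def by blast

lemma Field_pred_order: "Field (pred_order A lt x) = tree_pred A lt x"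
  unfolding pred_order_def Field_def by auto

lemma tree_comparable:
  assumes T: "is_tree A lt" and "lt a x" "lt b x"
  shows "a = b \<or> lt a b \<or> lt b a"
proof -
  have x: "x \<in> A" using tree_lt_in[OF T assms(2)] by blast
  have W: "Well_order (pred_order A lt x)" using tree_wo[OF T x] .
  have "a \<in> tree_pred A lt x" "b \<in> tree_pred A lt x"
    using assms tree_lt_in[OF T] unfolding tree_pred_def by auto
  hence "a \<in> Field (pred_order A lt x)" "b \<in> Field (pred_order A lt x)"
    by (auto simp: Field_pred_order)
  with W have "a = b \<or> (a, b) \<in> pred_order A lt x \<or> (b, a) \<in> pred_order A lt x"
    unfolding well_order_on_def linear_order_on_def total_on_def by blast
  thus ?thesis unfolding pred_order_def by auto
qed

lemma tree_comparable_le: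
  assumes T: "is_tree A lt" and "a = x \<or> lt a x" "b = x \<or> lt b x"
  shows "a = b \<or> lt a b \<or> lt b a"
  using assms tree_comparable[OF T] by blast

lemma tree_least:
  assumes T: "is_tree A lt" and x: "x \<in> A" and m0: "m0 \<in> S"
    and S: "S \<subseteq> {w. w = x \<or> lt w x}"
  shows "\<exists>m\<in>S. \<forall>w\<in>S. \<not> lt w m"
proof (cases "S \<inter> tree_pred A lt x = {}")
  case True
  hence "S \<subseteq> {x}" using S tree_lt_in[OF T] unfolding tree_pred_def by auto
  hence "S = {x}" using m0 by auto
  thus ?thesis using tree_irrefl[OF T] by auto
next
  case False
  have W: "Well_order (pred_order A lt x)" using tree_wo[OF T x] .
  hence wf: "wf (pred_order A lt x - Id)"
    unfolding well_order_on_def by blast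
  obtain q where q: "q \<in> S \<inter> tree_pred A lt x" using False by blast
  from wf_eq_minimal[THEN iffD1, OF wf, rule_format, OF q]
  obtain m where m: "m \<in> S \<inter> tree_pred A lt x"
    and mm: "\<And>y. (y, m) \<in> pred_order A lt x - Id \<Longrightarrow> y \<notin> S \<inter> tree_pred A lt x" by blast
  have "\<forall>w\<in>S. \<not> lt w m"
  proof (intro ballI notI)
    fix w assume w: "w \<in> S" and lw: "lt w m"
    have mx: "lt m x" using m unfolding tree_pred_def by auto
    show False
    proof (cases "w = x")
      case True thus False using lw mx tree_asym[OF T] by blast
    next
      case False
      hence wx: "lt w x" using w S by auto
      hence "w \<in> tree_pred A lt x" using tree_lt_in[OF T wx] unfolding tree_pred_def by auto
      moreover have "(w, m) \<in> pred_order A lt x - Id"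
        using lw m \<open>w \<in> tree_pred A lt x\<close> tree_irrefl[OF T] unfolding pred_order_def by auto
      ultimately show False using mm w by blast
    qed
  qed
  thus ?thesis using m by blast
qed

definition tgood :: "'a set \<Rightarrow> ('a \<Rightarrow> 'a \<Rightarrow> bool) \<Rightarrow> 'a set \<Rightarrow> bool" where
  "tgood A lt U \<longleftrightarrow> U \<subseteq> A \<and> (\<forall>s\<in>U. (\<forall>y\<in>A. \<not> lt y s) \<or> (\<exists>t. lt t s \<and> itv A lt t s \<subseteq> U))"

lemma gen_imp_tgood:
  assumes T: "is_tree A lt" and g: "generate_topology_on (tree_base A lt) U"
  shows "tgood A lt U"
  using g
proof induct
  case Empty
  then show ?case by (simp add: tgood_def)
next
  case (Int a b)
  show ?case unfolding tgood_def
  proof (intro conjI ballI)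
    show "a \<inter> b \<subseteq> A" using Int unfolding tgood_def by auto
    fix s assume s: "s \<in> a \<inter> b"
    show "(\<forall>y\<in>A. \<not> lt y s) \<or> (\<exists>t. lt t s \<and> itv A lt t s \<subseteq> a \<inter> b)"
    proof (cases "\<forall>y\<in>A. \<not> lt y s")
      case True thus ?thesis by blast
    next
      case False
      from Int s False obtain t1 where t1: "lt t1 s" "itv A lt t1 s \<subseteq> a"
        unfolding tgood_def by blast
      from Int s False obtain t2 where t2: "lt t2 s" "itv A lt t2 s \<subseteq> b"
        unfolding tgood_def by blast
      have "t1 = t2 \<or> lt t1 t2 \<or> lt t2 t1" using tree_comparable[OF T t1(1) t2(1)] .
      moreover have "lt t1 t2 \<Longrightarrow> itv A lt t2 s \<subseteq> itv A lt t1 s"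
        unfolding itv_def using tree_trans[OF T] by blast
      moreover have "lt t2 t1 \<Longrightarrow> itv A lt t1 s \<subseteq> itv A lt t2 s"
        unfolding itv_def using tree_trans[OF T] by blast
      ultimately show ?thesis using t1 t2 by blast
    qed
  qed
next
  case (UN K)
  show ?case unfolding tgood_def
  proof (intro conjI ballI)
    show "\<Union>K \<subseteq> A" using UN unfolding tgood_def by blast
    fix s assume "s \<in> \<Union>K"
    then obtain k where k: "k \<in> K" "s \<in> k" by blast
    with UN have "(\<forall>y\<in>A. \<not> lt y s) \<or> (\<exists>t. lt t s \<and> itv A lt t s \<subseteq> k)"
      unfolding tgood_def by blast
    thus "(\<forall>y\<in>A. \<not> lt y s) \<or> (\<exists>t. lt t s \<and> itv A lt t s \<subseteq> \<Union>K)" using k by blast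
  qed
next
  case (Basis s)
  then consider x y where "x \<in> A" "y \<in> A" "lt x y" "s = {z \<in> A. lt x z \<and> (z = y \<or> lt z y)}"
    | x where "x \<in> A" "\<forall>y\<in>A. \<not> lt y x" "s = {x}"
    unfolding tree_base_def by blast
  then show ?case
  proof cases
    case 1
    show ?thesis unfolding tgood_def
    proof (intro conjI ballI)
      show "s \<subseteq> A" using 1 by auto
      fix w assume w: "w \<in> s"
      have "itv A lt x w \<subseteq> s" unfolding itv_def 1 using w 1 tree_trans[OF T] by auto
      moreover have "lt x w" using w 1 by auto
      ultimately show "(\<forall>y\<in>A. \<not> lt y w) \<or> (\<exists>t. lt t w \<and> itv A lt t w \<subseteq> s)" by blast
    qed
  next
    case 2 thus ?thesis unfolding tgood_def by auto
  qed
qed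

lemma tgood_imp_gen:
  assumes T: "is_tree A lt" and g: "tgood A lt U"
  shows "generate_topology_on (tree_base A lt) U"
proof -
  define B where "B s = (if (\<forall>y\<in>A. \<not> lt y s) then {s} else itv A lt (SOME t. lt t s \<and> itv A lt t s \<subseteq> U) s)" for s
  have Bs: "s \<in> B s \<and> B s \<subseteq> U \<and> B s \<in> tree_base A lt" if s: "s \<in> U" for s
  proof (cases "\<forall>y\<in>A. \<not> lt y s")
    case True
    have "s \<in> A" using g s unfolding tgood_def by auto
    then show ?thesis using True s unfolding B_def tree_base_def by auto
  next
    case False
    then have ex: "\<exists>t. lt t s \<and> itv A lt t s \<subseteq> U" using g s unfolding tgood_def by blast
    define t where "t = (SOME t. lt t s \<and> itv A lt t s \<subseteq> U)"
    have t: "lt t s \<and> itv A lt t s \<subseteq> U" unfolding t_def using someI_ex[OF ex] .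
    have Bt: "B s = itv A lt t s" using False unfolding B_def t_def by auto
    have "t \<in> A" "s \<in> A" using tree_lt_in[OF T] t by auto
    then show ?thesis using t Bt unfolding tree_base_def itv_def by blast
  qed
  have "U = \<Union>(B ` U)" using Bs by blast
  moreover have "generate_topology_on (tree_base A lt) (\<Union>(B ` U))"
    by (rule generate_topology_on.UN) (use Bs in \<open>auto intro: generate_topology_on.Basis\<close>)
  ultimately show ?thesis by simp
qed

lemma openin_tree:
  assumes T: "is_tree A lt"
  shows "openin (tree_topology A lt) U \<longleftrightarrow> tgood A lt U"
  unfolding tree_topology_def openin_topology_generated_by_iff
  using gen_imp_tgood[OF T] tgood_imp_gen[OF T] by blast

lemma topspace_tree:
  assumes T: "is_tree A lt"
  shows "topspace (tree_topology A lt) = A"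
proof -
  have "tgood A lt A" unfolding tgood_def itv_def by auto
  hence "openin (tree_topology A lt) A" using openin_tree[OF T] by blast
  hence "A \<subseteq> topspace (tree_topology A lt)" by (simp add: openin_subset)
  moreover have "topspace (tree_topology A lt) \<subseteq> A"
    using openin_tree[OF T, of "topspace (tree_topology A lt)"] unfolding tgood_def by auto
  ultimately show ?thesis by blast
qed


lemma open_preimage_tgood:
  assumes T: "is_tree A lt" and c: "continuous_map (tree_topology A lt) Y f" and V: "openin Y V"
  shows "tgood A lt {z \<in> A. f z \<in> V}"
  using c V openin_tree[OF T] topspace_tree[OF T] unfolding continuous_map_def by metis

lemma tgood_nbhd:
  assumes "tgood A lt U" "s \<in> U" "lt y0 s" "y0 \<in> A"
  shows "\<exists>t. lt t s \<and> itv A lt t s \<subseteq> U"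
  using assms unfolding tgood_def by blast

definition Sw :: "'a set \<Rightarrow> ('a \<Rightarrow> 'a \<Rightarrow> bool) \<Rightarrow> ('a \<Rightarrow> 'b) \<Rightarrow> 'b \<Rightarrow> 'b set \<Rightarrow> 'a set" where
  "Sw A lt f y V = {z \<in> A. f z \<notin> V \<and> (\<exists>u. lt u z \<and> f u = y \<and> \<not>(\<exists>w. lt u w \<and> lt w z \<and> f w \<notin> V))}"

context
  fixes A :: "'a set" and lt :: "'a \<Rightarrow> 'a \<Rightarrow> bool" and Y :: "'b topology" and f :: "'a \<Rightarrow> 'b"
    and y :: 'b and V :: "'b set"
  assumes T: "is_tree A lt"
    and AC: "\<forall>C. tree_antichain A lt C \<longrightarrow> countable C"
    and cont: "continuous_map (tree_topology A lt) Y f"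
    and H: "Hausdorff_space Y" and y: "y \<in> topspace Y" and V: "openin Y V" and yV: "y \<in> V"
begin

lemma Sw_finite: "x \<in> A \<Longrightarrow> finite (Sw A lt f y V \<inter> tree_pred A lt x)"
proof (rule ccontr)
  assume x: "x \<in> A" and inf: "infinite (Sw A lt f y V \<inter> tree_pred A lt x)"
  define S where "S = {t. (t = x \<or> lt t x) \<and> infinite (Sw A lt f y V \<inter> tree_pred A lt t)}"
  have "x \<in> S" using inf unfolding S_def by auto
  from tree_least[OF T x this] obtain s where s: "s \<in> S" and smin: "\<And>w. w \<in> S \<Longrightarrow> \<not> lt w s"
    unfolding S_def by blast
  have sA: "s \<in> A" using s x tree_lt_in[OF T] unfolding S_def by auto
  have sinf: "infinite (Sw A lt f y V \<inter> tree_pred A lt s)" using s unfolding S_def by auto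
  have fin_below: "finite (Sw A lt f y V \<inter> tree_pred A lt t)" if "lt t s" for t
  proof (rule ccontr)
    assume "infinite (Sw A lt f y V \<inter> tree_pred A lt t)"
    moreover have "t = x \<or> lt t x" using s that tree_trans[OF T] unfolding S_def by blast
    ultimately have "t \<in> S" unfolding S_def by blast
    thus False using smin that by blast
  qed
  have between: "infinite {w \<in> Sw A lt f y V. lt t w \<and> lt w s}" if ts: "lt t s" for t
  proof
    assume fin: "finite {w \<in> Sw A lt f y V. lt t w \<and> lt w s}"
    have "Sw A lt f y V \<inter> tree_pred A lt s \<subseteq> (Sw A lt f y V \<inter> tree_pred A lt t) \<union> {t} \<union> {w \<in> Sw A lt f y V. lt t w \<and> lt w s}"
    proof
      fix w assume w: "w \<in> Sw A lt f y V \<inter> tree_pred A lt s"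
      hence ws: "lt w s" "w \<in> A" unfolding tree_pred_def by auto
      from tree_comparable[OF T ws(1) ts] have "w = t \<or> lt w t \<or> lt t w" .
      thus "w \<in> (Sw A lt f y V \<inter> tree_pred A lt t) \<union> {t} \<union> {w \<in> Sw A lt f y V. lt t w \<and> lt w s}"
        using w ws unfolding tree_pred_def by auto
    qed
    moreover have "finite ((Sw A lt f y V \<inter> tree_pred A lt t) \<union> {t} \<union> {w \<in> Sw A lt f y V. lt t w \<and> lt w s})"
      using fin fin_below[OF ts] by auto
    ultimately show False using sinf finite_subset by blast
  qed
  obtain y0 where y0: "y0 \<in> Sw A lt f y V \<inter> tree_pred A lt s" using sinf by (metis finite.emptyI ex_in_conv)
  hence y0s: "lt y0 s" "y0 \<in> A" unfolding tree_pred_def by auto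
  have fs: "f s \<in> topspace Y" using cont sA topspace_tree[OF T] unfolding continuous_map_def by auto
  show False
  proof (cases "f s \<in> V")
    case True
    have g: "tgood A lt {z \<in> A. f z \<in> V}" using open_preimage_tgood[OF T cont V] .
    obtain t where t: "lt t s" "itv A lt t s \<subseteq> {z \<in> A. f z \<in> V}"
      using tgood_nbhd[OF g _ y0s] sA True by blast
    obtain w where w: "w \<in> {w \<in> Sw A lt f y V. lt t w \<and> lt w s}" using between[OF t(1)]
      by (metis finite.emptyI ex_in_conv)
    hence "w \<in> itv A lt t s" unfolding itv_def Sw_def by auto
    hence "f w \<in> V" using t by auto
    moreover have "f w \<notin> V" using w unfolding Sw_def by auto
    ultimately show False by blast
  next
    case False
    hence fsy: "f s \<noteq> y" using yV by auto
    have op: "openin Y (topspace Y - {y})" using closedin_Hausdorff_singleton[OF H y]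
      by (simp add: openin_diff)
    have g: "tgood A lt {z \<in> A. f z \<in> topspace Y - {y}}" using open_preimage_tgood[OF T cont op] .
    obtain t where t: "lt t s" "itv A lt t s \<subseteq> {z \<in> A. f z \<in> topspace Y - {y}}"
      using tgood_nbhd[OF g _ y0s] sA fs fsy by blast
    let ?B = "{w \<in> Sw A lt f y V. lt t w \<and> lt w s}"
    have Binf: "infinite ?B" using between[OF t(1)] .
    obtain a where a: "a \<in> ?B" using Binf by (metis finite.emptyI ex_in_conv)
    obtain b where b: "b \<in> ?B - {a}" using Binf by (metis finite.emptyI ex_in_conv finite_Diff2 finite.insertI)
    have "a = b \<or> lt a b \<or> lt b a" using tree_comparable[OF T] a b by blast
    then obtain z1 z2 where z: "z1 \<in> ?B" "z2 \<in> ?B" "lt z1 z2" using a b by blast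
    from z(2) obtain u where u: "lt u z2" "f u = y" "\<not>(\<exists>w. lt u w \<and> lt w z2 \<and> f w \<notin> V)"
      unfolding Sw_def by blast
    have fz1: "f z1 \<notin> V" using z(1) unfolding Sw_def by auto
    have "u = z1 \<or> lt u z1 \<or> lt z1 u" using tree_comparable[OF T u(1) z(3)] .
    moreover have "u \<noteq> z1" using fz1 u(2) yV by auto
    moreover have "\<not> lt u z1" using u(3) z(3) fz1 by blast
    ultimately have "lt z1 u" by blast
    hence "u \<in> itv A lt t s" unfolding itv_def
      using z u(1) tree_trans[OF T] tree_lt_in[OF T] by blast
    hence "f u \<noteq> y" using t by auto
    thus False using u(2) by blast
  qed
qed

lemma Sw_countable: "countable (Sw A lt f y V)"
proof -
  define L where "L k = {z \<in> Sw A lt f y V. card (Sw A lt f y V \<inter> tree_pred A lt z) = k}" for k :: nat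
  have noless: False if z: "z \<in> L k" and w: "w \<in> L k" and zw: "lt z w" for z w k
  proof -
    have zA: "z \<in> A" "w \<in> A" using z w unfolding L_def Sw_def by auto
    have "Sw A lt f y V \<inter> tree_pred A lt z \<subset> Sw A lt f y V \<inter> tree_pred A lt w"
    proof
      show "Sw A lt f y V \<inter> tree_pred A lt z \<subseteq> Sw A lt f y V \<inter> tree_pred A lt w"
        unfolding tree_pred_def using zw tree_trans[OF T] by auto
      have "z \<in> Sw A lt f y V \<inter> tree_pred A lt w" using z zw zA unfolding L_def tree_pred_def by auto
      moreover have "z \<notin> Sw A lt f y V \<inter> tree_pred A lt z" using tree_irrefl[OF T] unfolding tree_pred_def by auto
      ultimately show "Sw A lt f y V \<inter> tree_pred A lt z \<noteq> Sw A lt f y V \<inter> tree_pred A lt w" by blast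
    qed
    hence "card (Sw A lt f y V \<inter> tree_pred A lt z) < card (Sw A lt f y V \<inter> tree_pred A lt w)"
      using psubset_card_mono Sw_finite[OF zA(2)] by blast
    thus False using z w unfolding L_def by auto
  qed
  have "tree_antichain A lt (L k)" for k
    unfolding tree_antichain_def using noless unfolding L_def Sw_def by blast
  hence "countable (L k)" for k using AC by blast
  hence "countable (\<Union>k. L k)" by blast
  moreover have "Sw A lt f y V \<subseteq> (\<Union>k. L k)" unfolding L_def by blast
  ultimately show ?thesis using countable_subset by blast
qed

end


lemma bad_countable:
  assumes T: "is_tree A lt"
    and AC: "\<forall>C. tree_antichain A lt C \<longrightarrow> countable C"
    and PC: "\<forall>x\<in>A. countable (tree_pred A lt x)"
    and cont: "continuous_map (tree_topology A lt) Y f"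
    and H: "Hausdorff_space Y" and y: "y \<in> topspace Y" and gd: "gdelta_in Y {y}"
  shows "countable {u \<in> A. f u = y \<and> \<not>(\<forall>v\<in>A. lt u v \<longrightarrow> f v = f u)}"
proof -
  obtain \<U> where U: "countable \<U>" "\<And>V. V \<in> \<U> \<Longrightarrow> openin Y V" "\<Inter>\<U> = {y}"
    using gd unfolding gdelta_in_alt intersection_of_def by blast
  have yV: "\<And>V. V \<in> \<U> \<Longrightarrow> y \<in> V" using U(3) by blast
  have sub: "{u \<in> A. f u = y \<and> \<not>(\<forall>v\<in>A. lt u v \<longrightarrow> f v = f u)}
      \<subseteq> (\<Union>V\<in>\<U>. \<Union>z\<in>Sw A lt f y V. tree_pred A lt z)"
  proof
    fix u assume "u \<in> {u \<in> A. f u = y \<and> \<not>(\<forall>v\<in>A. lt u v \<longrightarrow> f v = f u)}"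
    then obtain v where u: "u \<in> A" "f u = y" and v: "v \<in> A" "lt u v" "f v \<noteq> y" by auto
    have "f v \<notin> \<Inter>\<U>" using U(3) v(3) by auto
    then obtain V where V: "V \<in> \<U>" "f v \<notin> V" by blast
    define S where "S = {w. (w = v \<or> lt w v) \<and> f w \<notin> V \<and> lt u w}"
    have "v \<in> S" using V v unfolding S_def by auto
    from tree_least[OF T v(1) this] obtain z where z: "z \<in> S" and zmin: "\<And>w. w \<in> S \<Longrightarrow> \<not> lt w z"
      unfolding S_def by blast
    have zA: "z \<in> A" using z v tree_lt_in[OF T] unfolding S_def by auto
    have "z \<in> A \<and> f z \<notin> V \<and> (\<exists>u. lt u z \<and> f u = y \<and> \<not>(\<exists>w. lt u w \<and> lt w z \<and> f w \<notin> V))"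
    proof (intro conjI exI)
      show "z \<in> A" by fact
      show "f z \<notin> V" "lt u z" using z unfolding S_def by auto
      show "f u = y" by fact
      show "\<not>(\<exists>w. lt u w \<and> lt w z \<and> f w \<notin> V)"
      proof
        assume "\<exists>w. lt u w \<and> lt w z \<and> f w \<notin> V"
        then obtain w where w: "lt u w" "lt w z" "f w \<notin> V" by blast
        have "w = v \<or> lt w v" using z w(2) tree_trans[OF T] unfolding S_def by blast
        hence "w \<in> S" using w unfolding S_def by blast
        thus False using zmin w(2) by blast
      qed
    qed
    hence "z \<in> Sw A lt f y V" by (simp add: Sw_def)
    moreover have "u \<in> tree_pred A lt z" using u z unfolding S_def tree_pred_def by auto
    ultimately show "u \<in> (\<Union>V\<in>\<U>. \<Union>z\<in>Sw A lt f y V. tree_pred A lt z)" using V(1) by blast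
  qed
  have "countable (\<Union>V\<in>\<U>. \<Union>z\<in>Sw A lt f y V. tree_pred A lt z)"
  proof (rule countable_UN[OF U(1)])
    fix V assume V: "V \<in> \<U>"
    have c: "countable (Sw A lt f y V)" using Sw_countable[OF T AC cont H y U(2)[OF V] yV[OF V]] .
    show "countable (\<Union>z\<in>Sw A lt f y V. tree_pred A lt z)"
    proof (rule countable_UN[OF c])
      fix z assume "z \<in> Sw A lt f y V"
      hence "z \<in> A" unfolding Sw_def by auto
      thus "countable (tree_pred A lt z)" using PC by blast
    qed
  qed
  thus ?thesis using sub countable_subset by blast
qed


lemma underS_pred_order:
  assumes T: "is_tree B ltB" and a: "ltB a x"
  shows "underS (pred_order B ltB x) a = tree_pred B ltB a"
proof (rule set_eqI)
  fix b
  have aB: "a \<in> B" "x \<in> B" using tree_lt_in[OF T a] by auto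
  have "b \<in> underS (pred_order B ltB x) a \<longleftrightarrow> b \<noteq> a \<and> b \<in> B \<and> ltB b x \<and> ltB b a"
    unfolding underS_def pred_order_def tree_pred_def using aB a by auto
  also have "\<dots> \<longleftrightarrow> b \<in> B \<and> ltB b a"
    using tree_trans[OF T _ a] tree_irrefl[OF T, of a] by blast
  finally show "b \<in> underS (pred_order B ltB x) a \<longleftrightarrow> b \<in> tree_pred B ltB a"
    unfolding tree_pred_def by simp
qed

lemma Restr_pred_order:
  assumes T: "is_tree B ltB" and a: "ltB a x"
  shows "Restr (pred_order B ltB x) (underS (pred_order B ltB x) a) = pred_order B ltB a"
proof -
  have sub: "tree_pred B ltB a \<subseteq> tree_pred B ltB x"
    unfolding tree_pred_def using tree_trans[OF T _ a] by blast
  show ?thesis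
    unfolding underS_pred_order[OF T a]
    unfolding pred_order_def using sub by blast
qed

lemma pred_order_less:
  assumes T: "is_tree B ltB" and a: "ltB a x"
  shows "(pred_order B ltB a, pred_order B ltB x) \<in> ordLess"
proof -
  have xB: "x \<in> B" "a \<in> B" using tree_lt_in[OF T a] by auto
  have Wx: "Well_order (pred_order B ltB x)" using tree_wo[OF T xB(1)] .
  have Wa: "Well_order (pred_order B ltB a)" using tree_wo[OF T xB(2)] .
  have "a \<in> Field (pred_order B ltB x)" using a xB unfolding Field_pred_order tree_pred_def by auto
  moreover have "(pred_order B ltB a, Restr (pred_order B ltB x) (underS (pred_order B ltB x) a)) \<in> ordIso"
    unfolding Restr_pred_order[OF T a] using ordIso_reflexive[OF Wa] .
  ultimately show ?thesis using ordLess_iff_ordIso_Restr[OF Wx Wa] by blast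
qed

lemma height_gen:
  assumes T: "is_tree B ltB"
    and AC: "\<forall>C. tree_antichain B ltB C \<longrightarrow> countable C"
    and unc: "uncountable B"
    and r: "Well_order (r :: nat rel)"
  shows "\<exists>x\<in>B. (pred_order B ltB x, r) \<in> ordIso"
proof (rule ccontr)
  assume no: "\<not> (\<exists>x\<in>B. (pred_order B ltB x, r) \<in> ordIso)"
  have less: "\<exists>n\<in>Field r. (pred_order B ltB x, Restr r (underS r n)) \<in> ordIso" if x: "x \<in> B" for x
  proof -
    have W: "Well_order (pred_order B ltB x)" using tree_wo[OF T x] .
    have "(pred_order B ltB x, r) \<in> ordLess"
    proof -
      have "(pred_order B ltB x, r) \<in> ordLess \<or> (r, pred_order B ltB x) \<in> ordLeq" using ordLess_or_ordLeq[OF W r] .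
      moreover have "(r, pred_order B ltB x) \<notin> ordIso" using no x by (blast dest: ordIso_symmetric)
      moreover have "(r, pred_order B ltB x) \<notin> ordLess"
      proof
        assume "(r, pred_order B ltB x) \<in> ordLess"
        then obtain a where a: "a \<in> Field (pred_order B ltB x)"
          and iso: "(r, Restr (pred_order B ltB x) (underS (pred_order B ltB x) a)) \<in> ordIso"
          using ordLess_iff_ordIso_Restr[OF W r] by blast
        have ax: "ltB a x" "a \<in> B" using a unfolding Field_pred_order tree_pred_def by auto
        have "(r, pred_order B ltB a) \<in> ordIso" using iso unfolding Restr_pred_order[OF T ax(1)] .
        thus False using no ax(2) by (blast dest: ordIso_symmetric)
      qed
      ultimately show ?thesis unfolding ordLeq_iff_ordLess_or_ordIso by blast
    qed
    thus ?thesis using ordLess_iff_ordIso_Restr[OF r W] by blast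
  qed
  define L where "L n = {x \<in> B. (pred_order B ltB x, Restr r (underS r n)) \<in> ordIso}" for n
  have "tree_antichain B ltB (L n)" for n
  proof -
    have False if x: "x \<in> L n" and w: "w \<in> L n" and xw: "ltB x w" for x w
    proof -
      have "(pred_order B ltB x, pred_order B ltB w) \<in> ordLess" using pred_order_less[OF T xw] .
      moreover have "(pred_order B ltB w, pred_order B ltB x) \<in> ordIso"
      proof -
        have "(pred_order B ltB w, Restr r (underS r n)) \<in> ordIso" using w unfolding L_def by blast
        moreover have "(Restr r (underS r n), pred_order B ltB x) \<in> ordIso"
          using x unfolding L_def by (blast intro: ordIso_symmetric)
        ultimately show ?thesis by (rule ordIso_transitive)
      qed
      ultimately have "(pred_order B ltB x, pred_order B ltB x) \<in> ordLess" by (rule ordLess_ordIso_trans)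
      thus False using ordLess_irreflexive by blast
    qed
    thus ?thesis unfolding tree_antichain_def L_def by blast
  qed
  hence "countable (L n)" for n using AC by blast
  hence "countable (\<Union>n\<in>Field r. L n)" by (intro countable_UN countableI_type)
  moreover have "B \<subseteq> (\<Union>n\<in>Field r. L n)"
  proof
    fix x assume "x \<in> B"
    then obtain n where "n \<in> Field r" "(pred_order B ltB x, Restr r (underS r n)) \<in> ordIso"
      using less by blast
    thus "x \<in> (\<Union>n\<in>Field r. L n)" using \<open>x \<in> B\<close> unfolding L_def by blast
  qed
  ultimately show False using unc countable_subset by blast
qed


lemma tree_haus:
  assumes "is_tree A lt" "x \<in> A" "y \<in> A"
    "tree_pred A lt x = tree_pred A lt y" "tree_pred A lt x \<noteq> {}"
    "\<not> (\<exists>m\<in>tree_pred A lt x. \<forall>z\<in>tree_pred A lt x. z = m \<or> lt z m)"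
  shows "x = y"
proof -
  have H: "\<forall>x\<in>A. \<forall>y\<in>A. tree_pred A lt x = tree_pred A lt y \<and> tree_pred A lt x \<noteq> {} \<and>
        \<not> (\<exists>m\<in>tree_pred A lt x. \<forall>z\<in>tree_pred A lt x. z = m \<or> lt z m) \<longrightarrow> x = y"
    using assms(1) unfolding is_tree_def by (elim conjE)
  show ?thesis using H assms(2-6) by blast
qed

context
  fixes A :: "'a set" and lt :: "'a \<Rightarrow> 'a \<Rightarrow> bool" and D :: "'a set"
  assumes T: "is_tree A lt" and DA: "D \<subseteq> A" and Ddown: "\<And>x t. x \<in> D \<Longrightarrow> lt t x \<Longrightarrow> t \<in> D"
begin

definition ltD where "ltD a b \<longleftrightarrow> lt a b \<and> a \<in> D \<and> b \<in> D"

lemma tree_pred_D: "x \<in> D \<Longrightarrow> tree_pred D ltD x = tree_pred A lt x"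
  unfolding tree_pred_def ltD_def using Ddown DA by blast

lemma pred_order_D:
  assumes x: "x \<in> D" shows "pred_order D ltD x = pred_order A lt x"
proof -
  have sub: "tree_pred A lt x \<subseteq> D" using Ddown x unfolding tree_pred_def by blast
  show ?thesis unfolding pred_order_def tree_pred_D[OF x] ltD_def using sub by blast
qed

lemma is_tree_D: "is_tree D ltD"
proof -
  have t1: "\<forall>x y. ltD x y \<longrightarrow> x \<in> D \<and> y \<in> D" unfolding ltD_def by blast
  have t2: "\<forall>x\<in>D. \<not> ltD x x" unfolding ltD_def using tree_irrefl[OF T] by blast
  have t3: "\<forall>x\<in>D. \<forall>y\<in>D. \<forall>z\<in>D. ltD x y \<and> ltD y z \<longrightarrow> ltD x z"
    unfolding ltD_def using tree_trans[OF T] by blast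
  have t4: "\<forall>x\<in>D. Well_order (pred_order D ltD x)"
    using pred_order_D tree_wo[OF T] DA by auto
  have t5: "\<forall>x\<in>D. \<forall>y\<in>D. tree_pred D ltD x = tree_pred D ltD y \<and> tree_pred D ltD x \<noteq> {} \<and>
        \<not> (\<exists>m\<in>tree_pred D ltD x. \<forall>z\<in>tree_pred D ltD x. z = m \<or> ltD z m) \<longrightarrow> x = y"
  proof (intro ballI impI)
    fix x y assume xy: "x \<in> D" "y \<in> D" and h: "tree_pred D ltD x = tree_pred D ltD y \<and> tree_pred D ltD x \<noteq> {} \<and>
        \<not> (\<exists>m\<in>tree_pred D ltD x. \<forall>z\<in>tree_pred D ltD x. z = m \<or> ltD z m)"
    have eq: "tree_pred A lt x = tree_pred A lt y" "tree_pred A lt x \<noteq> {}"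
      using h tree_pred_D xy by auto
    have "\<not> (\<exists>m\<in>tree_pred A lt x. \<forall>z\<in>tree_pred A lt x. z = m \<or> lt z m)"
    proof
      assume "\<exists>m\<in>tree_pred A lt x. \<forall>z\<in>tree_pred A lt x. z = m \<or> lt z m"
      then obtain m where m: "m \<in> tree_pred A lt x" "\<forall>z\<in>tree_pred A lt x. z = m \<or> lt z m" by blast
      have "m \<in> D" using m(1) Ddown xy(1) unfolding tree_pred_def by blast
      have "\<forall>z\<in>tree_pred D ltD x. z = m \<or> ltD z m"
        using m tree_pred_D[OF xy(1)] \<open>m \<in> D\<close> unfolding ltD_def tree_pred_def by blast
      thus False using h m(1) tree_pred_D[OF xy(1)] by blast
    qed
    thus "x = y" using tree_haus[OF T _ _ eq] xy DA by blast
  qed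
  show ?thesis unfolding is_tree_def using t1 t2 t3 t4 t5 by (intro conjI)
qed

lemma suslin_D:
  assumes S: "suslin_tree A lt" and unc: "uncountable D"
  shows "suslin_tree D ltD"
proof -
  have S': "is_tree A lt" "height_omega1 A lt" "\<forall>C. tree_chain A lt C \<longrightarrow> countable C"
     "\<forall>C. tree_antichain A lt C \<longrightarrow> countable C"
    using S unfolding suslin_tree_def by simp_all
  have AC: "\<forall>C. tree_antichain A lt C \<longrightarrow> countable C" by (rule S'(4))
  have CC: "\<forall>C. tree_chain A lt C \<longrightarrow> countable C" by (rule S'(3))
  have PC: "\<forall>x\<in>A. countable (tree_pred A lt x)"
    using S'(2) unfolding height_omega1_def by (elim conjE)
  have ACD: "\<forall>C. tree_antichain D ltD C \<longrightarrow> countable C"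
  proof (intro allI impI)
    fix C assume "tree_antichain D ltD C"
    hence h: "C \<subseteq> D" "\<And>x y. x \<in> C \<Longrightarrow> y \<in> C \<Longrightarrow> x \<noteq> y \<Longrightarrow> \<not> ltD x y"
      unfolding tree_antichain_def by blast+
    have "C \<subseteq> A" using h(1) DA by blast
    moreover have "\<And>x y. x \<in> C \<Longrightarrow> y \<in> C \<Longrightarrow> x \<noteq> y \<Longrightarrow> \<not> lt x y"
      using h unfolding ltD_def by blast
    ultimately have "tree_antichain A lt C" unfolding tree_antichain_def by blast
    thus "countable C" using AC by blast
  qed
  have CCD: "\<forall>C. tree_chain D ltD C \<longrightarrow> countable C"
  proof (intro allI impI)
    fix C assume "tree_chain D ltD C"
    hence h: "C \<subseteq> D" "\<And>x y. x \<in> C \<Longrightarrow> y \<in> C \<Longrightarrow> x = y \<or> ltD x y \<or> ltD y x"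
      unfolding tree_chain_def by blast+
    have "C \<subseteq> A" using h(1) DA by blast
    moreover have "\<And>x y. x \<in> C \<Longrightarrow> y \<in> C \<Longrightarrow> x = y \<or> lt x y \<or> lt y x"
      using h unfolding ltD_def by blast
    ultimately have "tree_chain A lt C" unfolding tree_chain_def by blast
    thus "countable C" using CC by blast
  qed
  have H1: "\<forall>x\<in>D. countable (tree_pred D ltD x)"
  proof
    fix x assume x: "x \<in> D"
    show "countable (tree_pred D ltD x)" unfolding tree_pred_D[OF x] using PC x DA by blast
  qed
  have H2: "\<forall>r :: nat rel. Well_order r \<longrightarrow> (\<exists>x\<in>D. (pred_order D ltD x, r) \<in> ordIso)"
  proof (intro allI impI)
    fix r :: "nat rel" assume "Well_order r"
    thus "\<exists>x\<in>D. (pred_order D ltD x, r) \<in> ordIso" by (rule height_gen[OF is_tree_D ACD unc])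
  qed
  have H: "height_omega1 D ltD" unfolding height_omega1_def using H1 H2 by (intro conjI)
  show ?thesis unfolding suslin_tree_def using is_tree_D H ACD CCD by (intro conjI)
qed

lemma cont_D:
  assumes c: "continuous_map (tree_topology A lt) Y f"
  shows "continuous_map (tree_topology D ltD) Y f"
  unfolding continuous_map_def
proof (intro conjI allI impI)
  show "f \<in> topspace (tree_topology D ltD) \<rightarrow> topspace Y"
    using c DA unfolding continuous_map_def topspace_tree[OF T] topspace_tree[OF is_tree_D] by blast
  fix U assume U: "openin Y U"
  have g: "tgood A lt {z \<in> A. f z \<in> U}" using open_preimage_tgood[OF T c U] .
  have "tgood D ltD {x \<in> D. f x \<in> U}"
    unfolding tgood_def
  proof (intro conjI ballI)
    show "{x \<in> D. f x \<in> U} \<subseteq> D" by blast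
    fix s assume s: "s \<in> {x \<in> D. f x \<in> U}"
    show "(\<forall>y\<in>D. \<not> ltD y s) \<or> (\<exists>t. ltD t s \<and> itv D ltD t s \<subseteq> {x \<in> D. f x \<in> U})"
    proof (cases "\<forall>y\<in>D. \<not> ltD y s")
      case True thus ?thesis by blast
    next
      case False
      then obtain y0 where y0: "y0 \<in> D" "ltD y0 s" by blast
      hence "lt y0 s" "y0 \<in> A" using DA unfolding ltD_def by auto
      then obtain t where t: "lt t s" "itv A lt t s \<subseteq> {z \<in> A. f z \<in> U}"
        using tgood_nbhd[OF g] s DA by blast
      have tD: "t \<in> D" using Ddown s t(1) by blast
      hence "ltD t s" using s t(1) unfolding ltD_def by blast
      moreover have "itv D ltD t s \<subseteq> {x \<in> D. f x \<in> U}"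
        using t DA unfolding itv_def ltD_def by blast
      ultimately show ?thesis by blast
    qed
  qed
  thus "openin (tree_topology D ltD) {x \<in> topspace (tree_topology D ltD). f x \<in> U}"
    unfolding topspace_tree[OF is_tree_D] openin_tree[OF is_tree_D] .
qed

end


theorem lemma4p8:
  fixes Y :: "'b topology" and A :: "'a set" and lt :: "'a \<Rightarrow> 'a \<Rightarrow> bool"
  assumes "Hausdorff_space Y" and "regular_space Y"
    and "\<forall>y\<in>topspace Y. gdelta_in Y {y}"
    and "\<forall>(B :: 'a set) ltB (f :: 'a \<Rightarrow> 'b). suslin_tree B ltB \<and>
           continuous_map (tree_topology B ltB) Y f \<longrightarrow>
           (\<exists>y\<in>topspace Y. uncountable {x \<in> B. f x = y})"
    and "suslin_tree A lt"
  shows "S_prop (tree_topology A lt) Y"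
proof -
  note H = assms(1) and gd = assms(3) and hyp = assms(4) and S = assms(5)
  have S': "is_tree A lt" "height_omega1 A lt" "\<forall>C. tree_chain A lt C \<longrightarrow> countable C"
     "\<forall>C. tree_antichain A lt C \<longrightarrow> countable C"
    using S unfolding suslin_tree_def by simp_all
  have T: "is_tree A lt" by (rule S'(1))
  have AC: "\<forall>C. tree_antichain A lt C \<longrightarrow> countable C" by (rule S'(4))
  have PC: "\<forall>x\<in>A. countable (tree_pred A lt x)"
    using S'(2) unfolding height_omega1_def by (elim conjE)
  have top: "topspace (tree_topology A lt) = A" by (rule topspace_tree[OF T])
  show ?thesis unfolding S_prop_def
  proof (intro allI impI)
    fix f assume cont: "continuous_map (tree_topology A lt) Y f"
    define C where "C = {x \<in> A. \<forall>v\<in>A. lt x v \<longrightarrow> f v = f x}"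
    define D where "D = A - C"
    have DA: "D \<subseteq> A" unfolding D_def by blast
    have Cup: "w \<in> C" if "x \<in> C" "lt x w" for x w
    proof -
      have wA: "w \<in> A" using tree_lt_in[OF T that(2)] by blast
      have "f v = f w" if "v \<in> A" "lt w v" for v
      proof -
        have "f v = f x" using \<open>x \<in> C\<close> that tree_trans[OF T \<open>lt x w\<close>] unfolding C_def by blast
        moreover have "f w = f x" using \<open>x \<in> C\<close> wA \<open>lt x w\<close> unfolding C_def by blast
        ultimately show ?thesis by simp
      qed
      thus ?thesis using wA unfolding C_def by blast
    qed
    have Ddown: "t \<in> D" if "x \<in> D" "lt t x" for x t
    proof -
      have "t \<in> A" using tree_lt_in[OF T that(2)] by blast
      moreover have "t \<notin> C" using Cup[of t x] that unfolding D_def by blast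
      ultimately show ?thesis unfolding D_def by blast
    qed
    have Dcount: "countable D"
    proof (rule ccontr)
      assume unc: "uncountable D"
      have sD: "suslin_tree D (ltD lt D)" using suslin_D[OF T DA Ddown S unc] .
      have cD: "continuous_map (tree_topology D (ltD lt D)) Y f" using cont_D[OF T DA Ddown cont] .
      obtain y where y: "y \<in> topspace Y" and uy: "uncountable {x \<in> D. f x = y}"
        using hyp sD cD by blast
      have "{x \<in> D. f x = y} \<subseteq> {u \<in> A. f u = y \<and> \<not>(\<forall>v\<in>A. lt u v \<longrightarrow> f v = f u)}"
        unfolding D_def C_def by blast
      moreover have "countable {u \<in> A. f u = y \<and> \<not>(\<forall>v\<in>A. lt u v \<longrightarrow> f v = f u)}"
        using bad_countable[OF T AC PC cont H y] gd y by blast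
      ultimately show False using uy countable_subset by blast
    qed
    define M where "M = {m \<in> C. \<forall>t. lt t m \<longrightarrow> t \<notin> C}"
    have MC: "M \<subseteq> C" unfolding M_def by blast
    have Mcount: "countable M"
    proof -
      have "tree_antichain A lt M"
        unfolding tree_antichain_def
      proof (intro conjI ballI impI)
        show "M \<subseteq> A" unfolding M_def C_def by blast
      next
        fix x y assume "x \<in> M" "y \<in> M" "x \<noteq> y"
        thus "\<not> lt x y" unfolding M_def by blast
      next
        fix x y assume "x \<in> M" "y \<in> M" "x \<noteq> y"
        thus "\<not> lt y x" unfolding M_def by blast
      qed
      thus ?thesis using AC by blast
    qed
    have exM: "\<exists>m. m \<in> M \<and> (m = x \<or> lt m x)" if x: "x \<in> C" for x
    proof -
      have xA: "x \<in> A" using x unfolding C_def by blast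
      from tree_least[OF T xA, of x "{w. (w = x \<or> lt w x) \<and> w \<in> C}"] x
      obtain m where m: "(m = x \<or> lt m x) \<and> m \<in> C" and mm: "\<And>w. (w = x \<or> lt w x) \<and> w \<in> C \<Longrightarrow> \<not> lt w m"
        by blast
      have "\<forall>t. lt t m \<longrightarrow> t \<notin> C"
      proof (intro allI impI notI)
        fix t assume "lt t m" "t \<in> C"
        moreover have "t = x \<or> lt t x" using m \<open>lt t m\<close> tree_trans[OF T] by blast
        ultimately show False using mm by blast
      qed
      thus ?thesis using m unfolding M_def by blast
    qed
    have uniqM: "m = m'" if "m \<in> M" "m' \<in> M" "m = x \<or> lt m x" "m' = x \<or> lt m' x" for m m' x
    proof -
      have "m = m' \<or> lt m m' \<or> lt m' m" using tree_comparable_le[OF T that(3,4)] .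
      thus ?thesis using that unfolding M_def by blast
    qed
    define r where "r x = (if x \<in> C then (SOME m. m \<in> M \<and> (m = x \<or> lt m x)) else x)" for x
    have rC: "r x \<in> M \<and> (r x = x \<or> lt (r x) x)" if "x \<in> C" for x
      using someI_ex[OF exM[OF that]] that unfolding r_def by simp
    have rM: "r x = m" if "x \<in> C" "m \<in> M" "m = x \<or> lt m x" for x m
      using uniqM[OF _ that(2) _ that(3)] rC[OF that(1)] by blast
    have rD: "r x = x" if "x \<notin> C" for x using that unfolding r_def by simp
    define Z where "Z = D \<union> M"
    have ZA: "Z \<subseteq> A" unfolding Z_def D_def M_def C_def by blast
    have rA: "r x \<in> Z" if "x \<in> A" for x
    proof (cases "x \<in> C")
      case True thus ?thesis using rC[of x] unfolding Z_def by blast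
    next
      case False thus ?thesis using rD[of x] that unfolding Z_def D_def by simp
    qed
    have rfix: "\<forall>x\<in>Z. r x = x"
    proof
      fix x assume "x \<in> Z"
      thus "r x = x"
      proof (cases "x \<in> C")
        case True
        hence "x \<in> M" using \<open>x \<in> Z\<close> unfolding Z_def D_def by blast
        thus ?thesis using rM[OF True] by blast
      next
        case False thus ?thesis using rD by blast
      qed
    qed
    have fr: "\<forall>x\<in>topspace (tree_topology A lt). f (r x) = f x"
    proof
      fix x assume "x \<in> topspace (tree_topology A lt)"
      show "f (r x) = f x"
      proof (cases "x \<in> C")
        case True
        have m: "r x \<in> C" "r x = x \<or> lt (r x) x" using rC[OF True] MC by blast+
        have xA: "x \<in> A" using True unfolding C_def by blast
        show ?thesis using m xA unfolding C_def by auto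
      next
        case False thus ?thesis using rD by simp
      qed
    qed
    have Lin: "Lindelof_space (subtopology (tree_topology A lt) Z)"
    proof (rule countable_imp_Lindelof_space)
      have "countable Z" unfolding Z_def using Dcount Mcount by blast
      thus "countable (topspace (subtopology (tree_topology A lt) Z))"
        by (simp add: countable_subset)
    qed
    have rcont: "continuous_map (tree_topology A lt) (tree_topology A lt) r"
      unfolding continuous_map_def top
    proof (intro conjI allI impI)
      show "r \<in> A \<rightarrow> A" using rA ZA by blast
      fix U assume "openin (tree_topology A lt) U"
      hence U: "tgood A lt U" using openin_tree[OF T] by blast
      have "tgood A lt {x \<in> A. r x \<in> U}"
        unfolding tgood_def
      proof (intro conjI ballI)
        show "{x \<in> A. r x \<in> U} \<subseteq> A" by blast
        fix s assume s: "s \<in> {x \<in> A. r x \<in> U}"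
        show "(\<forall>y\<in>A. \<not> lt y s) \<or> (\<exists>t. lt t s \<and> itv A lt t s \<subseteq> {x \<in> A. r x \<in> U})"
        proof (cases "\<forall>y\<in>A. \<not> lt y s")
          case True thus ?thesis by blast
        next
          case False
          then obtain y0 where y0: "y0 \<in> A" "lt y0 s" by blast
          show ?thesis
          proof (cases "s \<in> C")
            case False
            hence "r s = s" using rD by blast
            hence "s \<in> U" using s by simp
            then obtain t where t: "lt t s" "itv A lt t s \<subseteq> U" using tgood_nbhd[OF U _ y0(2,1)] by blast
            have "itv A lt t s \<subseteq> {x \<in> A. r x \<in> U}"
            proof
              fix z assume z: "z \<in> itv A lt t s"
              have "z \<notin> C"
              proof
                assume "z \<in> C"
                hence "s \<in> C" using z Cup unfolding itv_def by auto
                thus False using False by blast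
              qed
              thus "z \<in> {x \<in> A. r x \<in> U}" using rD z t(2) unfolding itv_def by auto
            qed
            thus ?thesis using t(1) by blast
          next
            case True
            have m: "r s \<in> M" "r s = s \<or> lt (r s) s" using rC[OF True] by blast+
            show ?thesis
            proof (cases "r s = s")
              case False
              hence lm: "lt (r s) s" using m by blast
              have "itv A lt (r s) s \<subseteq> {x \<in> A. r x \<in> U}"
              proof
                fix z assume z: "z \<in> itv A lt (r s) s"
                hence zA: "z \<in> A" and lz: "lt (r s) z" unfolding itv_def by auto
                have zC: "z \<in> C" using Cup[OF _ lz] m(1) MC by blast
                have "r z = r s" using rM[OF zC m(1)] lz by blast
                thus "z \<in> {x \<in> A. r x \<in> U}" using zA s by simp
              qed
              thus ?thesis using lm by blast
            next
              case True
              hence sM: "s \<in> M" and sU: "s \<in> U" using m s by auto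
              then obtain t where t: "lt t s" "itv A lt t s \<subseteq> U" using tgood_nbhd[OF U _ y0(2,1)] by blast
              have "itv A lt t s \<subseteq> {x \<in> A. r x \<in> U}"
              proof
                fix z assume z: "z \<in> itv A lt t s"
                hence zA: "z \<in> A" "z = s \<or> lt z s" unfolding itv_def by auto
                have "r z = z"
                proof (cases "z = s")
                  case True thus ?thesis using \<open>r s = s\<close> by simp
                next
                  case False
                  hence "lt z s" using zA by blast
                  hence "z \<notin> C" using sM unfolding M_def by blast
                  thus ?thesis using rD by blast
                qed
                thus "z \<in> {x \<in> A. r x \<in> U}" using z t(2) zA by auto
              qed
              thus ?thesis using t(1) by blast
            qed
          qed
        qed
      qed
      thus "openin (tree_topology A lt) {x \<in> A. r x \<in> U}" using openin_tree[OF T] by blast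
    qed
    have rcontZ: "continuous_map (tree_topology A lt) (subtopology (tree_topology A lt) Z) r"
      unfolding continuous_map_in_subtopology using rcont rA top by auto
    show "\<exists>Z r. Z \<subseteq> topspace (tree_topology A lt) \<and> Lindelof_space (subtopology (tree_topology A lt) Z) \<and>
               continuous_map (tree_topology A lt) (subtopology (tree_topology A lt) Z) r \<and> (\<forall>x\<in>Z. r x = x) \<and>
               (\<forall>x\<in>topspace (tree_topology A lt). f (r x) = f x)"
      using ZA top Lin rcontZ rfix fr by blast
  qed
qed

end
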